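(* For any graph $G$ with no isolated vertex and any noncomplete graph $H$ with $\gamma(H)=1$, $\gamma_{(1,0,0)}^s(G\circ H)=\gamma_{(2,1,0)}(G)$.
   Context: All graphs are finite and simple; $\gamma(H)$ is the domination number; $N(v)$ is the open neighbourhood. For an integer $l\ge1$ and $w=(w_0,\dots,w_l)$ with $w_0\ge1$, $w_i\ge0$ integers, a function $f:V(G)\to\{0,\dots,l\}$ is a $w$-dominating function if $\sum_{u\in N(v)}f(u)\ge w_i$ for every vertex $v$ with $f(v)=i$; its weight is $\sum_v f(v)$, and $\gamma_w(G)$ is the minimum weight of a $w$-dominating function. For adjacent $v,u$ with $f(v)=0$, $f(u)>0$, $f_{u\to v}$ is defined by $f_{u\to v}(v)=1$, $f_{u\to v}(u)=f(u)-1$, $f_{u\to v}(x)=f(x)$ otherwise. A $w$-dominating $f$ is secure if for every $v$ with $f(v)=0$ there is $u\in N(v)$ with $f(u)>0$ such that $f_{u\to v}$ is $w$-dominating; $\gamma_w^s(G)$ is the minimum weight of a secure $w$-dominating function. The lexicographic product $G\circ H$ has vertex set $V(G)\times V(H)$, with $(u,v)(x,y)$ an edge iff $ux\in E(G)$, or $u=x$ and $vy\in E(H)$. *)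

theory Defs
  imports Main
begin

definition graph :: "'a set \<Rightarrow> ('a \<Rightarrow> 'a \<Rightarrow> bool) \<Rightarrow> bool" where
  "graph V E \<longleftrightarrow> finite V \<and> (\<forall>u v. E u v \<longrightarrow> u \<in> V \<and> v \<in> V)
     \<and> (\<forall>u v. E u v \<longrightarrow> E v u) \<and> (\<forall>v. \<not> E v v)"

definition nbhd :: "'a set \<Rightarrow> ('a \<Rightarrow> 'a \<Rightarrow> bool) \<Rightarrow> 'a \<Rightarrow> 'a set" where
  "nbhd V E v = {u \<in> V. E v u}"

definition no_isolated :: "'a set \<Rightarrow> ('a \<Rightarrow> 'a \<Rightarrow> bool) \<Rightarrow> bool" where
  "no_isolated V E \<longleftrightarrow> (\<forall>v\<in>V. nbhd V E v \<noteq> {})"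

definition complete_graph :: "'a set \<Rightarrow> ('a \<Rightarrow> 'a \<Rightarrow> bool) \<Rightarrow> bool" where
  "complete_graph V E \<longleftrightarrow> (\<forall>u\<in>V. \<forall>v\<in>V. u \<noteq> v \<longrightarrow> E u v)"

definition dominating_set :: "'a set \<Rightarrow> ('a \<Rightarrow> 'a \<Rightarrow> bool) \<Rightarrow> 'a set \<Rightarrow> bool" where
  "dominating_set V E S \<longleftrightarrow> S \<subseteq> V \<and> (\<forall>v\<in>V - S. \<exists>u\<in>S. E v u)"

definition domination_number :: "'a set \<Rightarrow> ('a \<Rightarrow> 'a \<Rightarrow> bool) \<Rightarrow> nat" where
  "domination_number V E = (LEAST n. \<exists>S. dominating_set V E S \<and> card S = n)"

definition lex_edges :: "('a \<Rightarrow> 'a \<Rightarrow> bool) \<Rightarrow> ('b \<Rightarrow> 'b \<Rightarrow> bool)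
    \<Rightarrow> ('a \<times> 'b) \<Rightarrow> ('a \<times> 'b) \<Rightarrow> bool" where
  "lex_edges E F p q \<longleftrightarrow> E (fst p) (fst q) \<or> (fst p = fst q \<and> F (snd p) (snd q))"

text \<open>The weight vector w = (w_0,...,w_l) is a list of length l+1, so l = length w - 1.
  A w-dominating function takes values in {0..l} on V.\<close>
definition w_dominating :: "'a set \<Rightarrow> ('a \<Rightarrow> 'a \<Rightarrow> bool) \<Rightarrow> nat list \<Rightarrow> ('a \<Rightarrow> nat) \<Rightarrow> bool" where
  "w_dominating V E w f \<longleftrightarrow>
     (\<forall>v\<in>V. f v \<le> length w - 1) \<and>
     (\<forall>v\<in>V. w ! (f v) \<le> (\<Sum>u\<in>nbhd V E v. f u))"

definition weight :: "'a set \<Rightarrow> ('a \<Rightarrow> nat) \<Rightarrow> nat" where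
  "weight V f = (\<Sum>v\<in>V. f v)"

definition w_domination_number :: "'a set \<Rightarrow> ('a \<Rightarrow> 'a \<Rightarrow> bool) \<Rightarrow> nat list \<Rightarrow> nat" where
  "w_domination_number V E w = (LEAST n. \<exists>f. w_dominating V E w f \<and> weight V f = n)"

definition move :: "('a \<Rightarrow> nat) \<Rightarrow> 'a \<Rightarrow> 'a \<Rightarrow> 'a \<Rightarrow> nat" where
  "move f u v = (f(u := f u - 1))(v := 1)"

definition secure_w_dominating :: "'a set \<Rightarrow> ('a \<Rightarrow> 'a \<Rightarrow> bool) \<Rightarrow> nat list \<Rightarrow> ('a \<Rightarrow> nat) \<Rightarrow> bool" where
  "secure_w_dominating V E w f \<longleftrightarrow> w_dominating V E w f \<and>
     (\<forall>v\<in>V. f v = 0 \<longrightarrow> (\<exists>u\<in>nbhd V E v. f u > 0 \<and> w_dominating V E w (move f u v)))"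

definition secure_w_domination_number :: "'a set \<Rightarrow> ('a \<Rightarrow> 'a \<Rightarrow> bool) \<Rightarrow> nat list \<Rightarrow> nat" where
  "secure_w_domination_number V E w =
     (LEAST n. \<exists>f. secure_w_dominating V E w f \<and> weight V f = n)"

end

theory Submission
  imports Defs
begin

lemma nbhd_mem: "u \<in> nbhd V E v \<longleftrightarrow> u \<in> V \<and> E v u"
  by (simp add: nbhd_def)

lemma nbhd_finite: "finite V \<Longrightarrow> finite (nbhd V E v)"
  by (simp add: nbhd_def)

lemma lex_nbhd_mem:
  "(a,b) \<in> nbhd (V \<times> W) (lex_edges E F) (x,y) \<longleftrightarrow> a \<in> V \<and> b \<in> W \<and> (E x a \<or> (x = a \<and> F y b))"
  by (simp add: nbhd_def lex_edges_def)

lemma dom100: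
  assumes "finite V"
  shows "w_dominating V E [1,0,0] f \<longleftrightarrow>
    (\<forall>v\<in>V. f v \<le> 2) \<and> (\<forall>v\<in>V. f v = 0 \<longrightarrow> (\<exists>u\<in>nbhd V E v. 0 < f u))"
proof -
  have fin: "\<And>v. finite (nbhd V E v)" using assms by (simp add: nbhd_def)
  have key: "\<And>v. f v \<le> 2 \<Longrightarrow> ([1,0,0] ! f v \<le> sum f (nbhd V E v)) \<longleftrightarrow>
      (f v = 0 \<longrightarrow> (\<exists>u\<in>nbhd V E v. 0 < f u))"
  proof -
    fix v assume "f v \<le> (2::nat)"
    then have "f v = 0 \<or> f v = 1 \<or> f v = 2" by auto
    moreover have "(1 \<le> sum f (nbhd V E v)) \<longleftrightarrow> (\<exists>u\<in>nbhd V E v. 0 < f u)"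
      using sum_eq_0_iff[OF fin[of v], of f] by auto
    ultimately show "([1,0,0] ! f v \<le> sum f (nbhd V E v)) \<longleftrightarrow>
      (f v = 0 \<longrightarrow> (\<exists>u\<in>nbhd V E v. 0 < f u))" by auto
  qed
  have L: "length [1,0,0::nat] - 1 = 2" by simp
  show ?thesis unfolding w_dominating_def L using key by blast
qed

lemma dom210:
  "w_dominating V E [2,1,0] f \<longleftrightarrow>
    (\<forall>v\<in>V. f v \<le> 2) \<and> (\<forall>v\<in>V. f v = 0 \<longrightarrow> 2 \<le> sum f (nbhd V E v))
     \<and> (\<forall>v\<in>V. f v = 1 \<longrightarrow> 1 \<le> sum f (nbhd V E v))"
proof -
  have key: "\<And>v. f v \<le> 2 \<Longrightarrow> ([2,1,0] ! f v \<le> sum f (nbhd V E v)) \<longleftrightarrow>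
      (f v = 0 \<longrightarrow> 2 \<le> sum f (nbhd V E v)) \<and> (f v = 1 \<longrightarrow> 1 \<le> sum f (nbhd V E v))"
  proof -
    fix v assume "f v \<le> (2::nat)"
    then have "f v = 0 \<or> f v = 1 \<or> f v = 2" by auto
    then show "([2,1,0] ! f v \<le> sum f (nbhd V E v)) \<longleftrightarrow>
      (f v = 0 \<longrightarrow> 2 \<le> sum f (nbhd V E v)) \<and> (f v = 1 \<longrightarrow> 1 \<le> sum f (nbhd V E v))" by auto
  qed
  have L: "length [2,1,0::nat] - 1 = 2" by simp
  show ?thesis unfolding w_dominating_def L using key by blast
qed

lemma dom_number_1:
  assumes "graph W F" "domination_number W F = 1"
  shows "\<exists>h\<in>W. \<forall>v\<in>W. v \<noteq> h \<longrightarrow> F v h"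
proof -
  have "\<exists>n S. dominating_set W F S \<and> card S = n"
    by (rule exI[of _ "card W"], rule exI[of _ W]) (simp add: dominating_set_def)
  from LeastI_ex[OF this] assms(2) obtain S where S: "dominating_set W F S" "card S = 1"
    unfolding domination_number_def by auto
  then obtain h where "S = {h}" by (auto simp: card_1_singleton_iff)
  with S show ?thesis unfolding dominating_set_def by auto
qed


lemma move_ok:
  assumes gV: "graph V E" and gW: "graph W F"
    and hW: "h \<in> W" and huniv: "\<forall>v\<in>W. v \<noteq> h \<longrightarrow> F v h"
    and fd: "w_dominating V E [2,1,0] f"
    and gdef: "g = (\<lambda>p. if snd p = h then f (fst p) else 0)"
    and u1V: "u1 \<in> V" and fu1: "0 < f u1" and t1V: "t1 \<in> V" and t2W: "t2 \<in> W"
    and gt: "g (t1,t2) = 0" and adj: "E t1 u1 \<or> (t1 = u1 \<and> F t2 h)"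
  shows "w_dominating (V \<times> W) (lex_edges E F) [1,0,0] (move g (u1,h) (t1,t2))"
proof -
  have finV: "finite V" and finW: "finite W" using gV gW by (auto simp: graph_def)
  have symE: "\<And>a b. E a b \<Longrightarrow> E b a" and irrE: "\<And>a. \<not> E a a" using gV by (auto simp: graph_def)
  have symF: "\<And>a b. F a b \<Longrightarrow> F b a" using gW by (auto simp: graph_def)
  from fd[unfolded dom210] have f2: "\<forall>v\<in>V. f v \<le> 2" and f0: "\<forall>v\<in>V. f v = 0 \<longrightarrow> 2 \<le> sum f (nbhd V E v)"
    and f1: "\<forall>v\<in>V. f v = 1 \<longrightarrow> 1 \<le> sum f (nbhd V E v)" by blast+
  define g' where "g' = move g (u1,h) (t1,t2)"
  have gu: "g (u1,h) = f u1" using gdef by simp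
  have ut: "(u1,h) \<noteq> (t1,t2)" using gt gu fu1 by auto
  have g'_t: "g' (t1,t2) = 1" by (simp add: g'_def move_def)
  have g'_u: "g' (u1,h) = f u1 - 1" using ut gu by (auto simp add: g'_def move_def)
  have g'_o: "\<And>p. p \<noteq> (t1,t2) \<Longrightarrow> p \<noteq> (u1,h) \<Longrightarrow> g' p = g p" by (simp add: g'_def move_def)
  have K: "\<And>z. z \<in> V \<Longrightarrow> f z = 0 \<Longrightarrow>
      (\<exists>z'\<in>nbhd V E z. z' \<noteq> u1 \<and> 0 < f z') \<or> (u1 \<in> nbhd V E z \<and> 2 \<le> f u1)"
  proof (rule ccontr)
    fix z assume zV: "z \<in> V" and fz: "f z = 0"
      and nc: "\<not> ((\<exists>z'\<in>nbhd V E z. z' \<noteq> u1 \<and> 0 < f z') \<or> (u1 \<in> nbhd V E z \<and> 2 \<le> f u1))"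
    let ?N = "nbhd V E z"
    have finN: "finite ?N" using finV by (simp add: nbhd_def)
    have rest: "sum f (?N - {u1}) = 0" using nc by (auto intro: sum.neutral)
    have "2 \<le> sum f ?N" using f0 zV fz by auto
    show False
    proof (cases "u1 \<in> ?N")
      case True
      then have "sum f ?N = f u1 + sum f (?N - {u1})" using finN by (simp add: sum.remove)
      with rest \<open>2 \<le> sum f ?N\<close> True nc show False by auto
    next
      case False
      then have "?N - {u1} = ?N" by auto
      with rest \<open>2 \<le> sum f ?N\<close> show False by auto
    qed
  qed
  have K1: "\<And>z. z \<in> V \<Longrightarrow> f z = 1 \<Longrightarrow> \<exists>z'\<in>nbhd V E z. 0 < f z'"
  proof -
    fix z assume "z \<in> V" "f z = 1"
    then have "sum f (nbhd V E z) \<noteq> 0" using f1 by auto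
    then show "\<exists>z'\<in>nbhd V E z. 0 < f z'" using sum_eq_0_iff[OF nbhd_finite[OF finV], of f] by auto
  qed
  have "\<forall>p\<in>V \<times> W. g' p \<le> 2"
  proof
    fix p assume "p \<in> V \<times> W"
    then show "g' p \<le> 2" using f2 u1V unfolding g'_def move_def gdef by auto
  qed
  moreover have "\<forall>p\<in>V \<times> W. g' p = 0 \<longrightarrow> (\<exists>q\<in>nbhd (V \<times> W) (lex_edges E F) p. 0 < g' q)"
  proof (intro ballI impI)
    fix p assume pVW: "p \<in> V \<times> W" and gp: "g' p = 0"
    obtain z w where p: "p = (z,w)" by (cases p)
    have zV: "z \<in> V" and wW: "w \<in> W" using pVW p by auto
    have pt: "(z,w) \<noteq> (t1,t2)" using gp g'_t p by auto
    show "\<exists>q\<in>nbhd (V \<times> W) (lex_edges E F) p. 0 < g' q"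
    proof -
      let ?G = "\<exists>q\<in>nbhd (V \<times> W) (lex_edges E F) p. 0 < g' q"
      have Q: "\<And>z'. z' \<in> V \<Longrightarrow> 0 < f z' \<Longrightarrow> z' \<noteq> u1 \<Longrightarrow> E z z' \<or> (z = z' \<and> w \<noteq> h) \<Longrightarrow> ?G"
      proof -
        fix z' assume a: "z' \<in> V" "0 < f z'" "z' \<noteq> u1" "E z z' \<or> (z = z' \<and> w \<noteq> h)"
        have "(z',h) \<noteq> (t1,t2)" using gt a(2) gdef by auto
        then have "g' (z',h) = f z'" using g'_o a(3) gdef by auto
        moreover have "(z',h) \<in> nbhd (V \<times> W) (lex_edges E F) p"
          using a(1,4) hW huniv wW p by (auto simp: lex_nbhd_mem)
        ultimately show ?G using a(2) by force
      qed
      have R: "2 \<le> f u1 \<Longrightarrow> E z u1 \<or> (z = u1 \<and> w \<noteq> h) \<Longrightarrow> ?G"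
      proof -
        assume a: "2 \<le> f u1" "E z u1 \<or> (z = u1 \<and> w \<noteq> h)"
        have "(u1,h) \<in> nbhd (V \<times> W) (lex_edges E F) p"
          using a(2) u1V hW huniv wW p by (auto simp: lex_nbhd_mem)
        moreover have "0 < g' (u1,h)" using g'_u a(1) by simp
        ultimately show ?G by force
      qed
      show ?thesis
      proof (cases "E z t1")
        case True
        have "(t1,t2) \<in> nbhd (V \<times> W) (lex_edges E F) p"
          using True t1V t2W p by (auto simp: lex_nbhd_mem)
        then show ?thesis using g'_t by force
      next
        case nE: False
        show ?thesis
        proof (cases "f z = 0")
          case True
          from K[OF zV True] show ?thesis
          proof
            assume "\<exists>z'\<in>nbhd V E z. z' \<noteq> u1 \<and> 0 < f z'"
            then obtain z' where "z' \<in> V" "E z z'" "z' \<noteq> u1" "0 < f z'" by (auto simp: nbhd_mem)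
            then show ?thesis using Q by blast
          next
            assume "u1 \<in> nbhd V E z \<and> 2 \<le> f u1"
            then show ?thesis using R by (auto simp: nbhd_mem)
          qed
        next
          case fpos: False
          show ?thesis
          proof (cases "z = u1")
            case False
            have "w \<noteq> h"
            proof
              assume "w = h"
              then have "(z,w) \<noteq> (u1,h)" using False by auto
              then have "g' (z,w) = f z" using g'_o pt gdef \<open>w = h\<close> by auto
              with gp p fpos show False by auto
            qed
            then show ?thesis using Q[of z] zV fpos False by auto
          next
            case True
            have zt: "z = t1" using adj nE True symE by auto
            show ?thesis
            proof (cases "2 \<le> f u1")
              case True
              have "w \<noteq> h"
              proof
                assume "w = h"
                then have "g' (z,w) = f u1 - 1" using g'_u \<open>z = u1\<close> by simp
                with gp p True show False by auto
              qed
              then show ?thesis using R True \<open>z = u1\<close> by auto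
            next
              case False
              then have "f z = 1" using fpos \<open>z = u1\<close> by auto
              from K1[OF zV this] obtain z' where "z' \<in> V" "E z z'" "0 < f z'" by (auto simp: nbhd_mem)
              moreover have "z' \<noteq> u1" using \<open>E z z'\<close> \<open>z = u1\<close> irrE by auto
              ultimately show ?thesis using Q by blast
            qed
          qed
        qed
      qed
    qed
  qed
  ultimately show ?thesis unfolding g'_def[symmetric]
    using dom100[of "V \<times> W"] finV finW by auto
qed


lemma upper:
  assumes gV: "graph V E" and gW: "graph W F"
    and hW: "h \<in> W" and huniv: "\<forall>v\<in>W. v \<noteq> h \<longrightarrow> F v h"
    and fd: "w_dominating V E [2,1,0] f"
  shows "secure_w_dominating (V \<times> W) (lex_edges E F) [1,0,0] (\<lambda>p. if snd p = h then f (fst p) else 0)"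
    and "weight (V \<times> W) (\<lambda>p. if snd p = h then f (fst p) else 0) = weight V f"
proof -
  define g where "g = (\<lambda>p::'a \<times> 'b. if snd p = h then f (fst p) else 0)"
  have finV: "finite V" and finW: "finite W" using gV gW by (auto simp: graph_def)
  from fd[unfolded dom210] have f2: "\<forall>v\<in>V. f v \<le> 2" and f0: "\<forall>v\<in>V. f v = 0 \<longrightarrow> 2 \<le> sum f (nbhd V E v)"
    by blast+
  have pos: "\<And>x. x \<in> V \<Longrightarrow> f x = 0 \<Longrightarrow> \<exists>x'\<in>nbhd V E x. 0 < f x'"
  proof -
    fix x assume "x \<in> V" "f x = 0"
    then have "sum f (nbhd V E x) \<noteq> 0" using f0 by fastforce
    then show "\<exists>x'\<in>nbhd V E x. 0 < f x'" using sum_eq_0_iff[OF nbhd_finite[OF finV], of f] by auto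
  qed
  have sec: "\<forall>p\<in>V \<times> W. g p = 0 \<longrightarrow> (\<exists>u\<in>nbhd (V \<times> W) (lex_edges E F) p. 0 < g u \<and>
        w_dominating (V \<times> W) (lex_edges E F) [1,0,0] (move g u p))"
  proof (intro ballI impI)
    fix p assume pVW: "p \<in> V \<times> W" and gp: "g p = 0"
    obtain x y where p: "p = (x,y)" by (cases p)
    have xV: "x \<in> V" and yW: "y \<in> W" using pVW p by auto
    show "\<exists>u\<in>nbhd (V \<times> W) (lex_edges E F) p. 0 < g u \<and>
        w_dominating (V \<times> W) (lex_edges E F) [1,0,0] (move g u p)"
    proof (cases "f x = 0")
      case True
      from pos[OF xV True] obtain x' where x': "x' \<in> V" "E x x'" "0 < f x'" by (auto simp: nbhd_mem)
      have "(x',h) \<in> nbhd (V \<times> W) (lex_edges E F) p" using x' hW p by (auto simp: lex_nbhd_mem)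
      moreover have "0 < g (x',h)" using x' by (simp add: g_def)
      moreover have "w_dominating (V \<times> W) (lex_edges E F) [1,0,0] (move g (x',h) (x,y))"
        by (rule move_ok[OF gV gW hW huniv fd g_def x'(1) x'(3) xV yW]) (use gp p x' in auto)
      ultimately show ?thesis using p by blast
    next
      case False
      then have yh: "y \<noteq> h" using gp p by (auto simp: g_def)
      have "(x,h) \<in> nbhd (V \<times> W) (lex_edges E F) p" using xV hW huniv yW yh p by (auto simp: lex_nbhd_mem)
      moreover have "0 < g (x,h)" using False by (simp add: g_def)
      moreover have "w_dominating (V \<times> W) (lex_edges E F) [1,0,0] (move g (x,h) (x,y))"
        by (rule move_ok[OF gV gW hW huniv fd g_def xV _ xV yW]) (use gp p False huniv yW yh in auto)
      ultimately show ?thesis using p by blast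
    qed
  qed
  have dom: "w_dominating (V \<times> W) (lex_edges E F) [1,0,0] g"
  proof -
    have "\<forall>p\<in>V \<times> W. g p \<le> 2" using f2 by (auto simp: g_def)
    moreover have "\<forall>p\<in>V \<times> W. g p = 0 \<longrightarrow> (\<exists>q\<in>nbhd (V \<times> W) (lex_edges E F) p. 0 < g q)"
      using sec by blast
    ultimately show ?thesis using dom100[of "V \<times> W"] finV finW by auto
  qed
  show "secure_w_dominating (V \<times> W) (lex_edges E F) [1,0,0] (\<lambda>p. if snd p = h then f (fst p) else 0)"
    using dom sec unfolding secure_w_dominating_def g_def by blast
  have "weight (V \<times> W) g = (\<Sum>x\<in>V. \<Sum>y\<in>W. g (x,y))"
    unfolding weight_def by (simp add: sum.cartesian_product)
  also have "\<dots> = (\<Sum>x\<in>V. f x)" using hW finW by (simp add: g_def)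
  finally show "weight (V \<times> W) (\<lambda>p. if snd p = h then f (fst p) else 0) = weight V f"
    by (simp add: g_def weight_def)
qed


lemma lower:
  assumes gV: "graph V E" and gW: "graph W F"
    and aW: "a \<in> W" and bW: "b \<in> W" and ab: "a \<noteq> b" and nab: "\<not> F a b"
    and sec: "secure_w_dominating (V \<times> W) (lex_edges E F) [1,0,0] g"
  shows "w_dominating V E [2,1,0] (\<lambda>x. min 2 (\<Sum>y\<in>W. g (x,y)))"
    and "weight V (\<lambda>x. min 2 (\<Sum>y\<in>W. g (x,y))) \<le> weight (V \<times> W) g"
proof -
  define f where "f = (\<lambda>x. min 2 (\<Sum>y\<in>W. g (x,y)))"
  define s where "s = (\<lambda>x. (\<Sum>y\<in>W. g (x,y)))"
  have finV: "finite V" and finW: "finite W" using gV gW by (auto simp: graph_def)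
  have finVW: "finite (V \<times> W)" using finV finW by simp
  have symE: "\<And>a b. E a b \<Longrightarrow> E b a" and irrE: "\<And>a. \<not> E a a" using gV by (auto simp: graph_def)
  have symF: "\<And>a b. F a b \<Longrightarrow> F b a" using gW by (auto simp: graph_def)
  let ?N = "nbhd (V \<times> W) (lex_edges E F)"
  from sec have gd: "w_dominating (V \<times> W) (lex_edges E F) [1,0,0] g"
    and gs: "\<forall>p\<in>V \<times> W. g p = 0 \<longrightarrow> (\<exists>u\<in>?N p. 0 < g u \<and>
        w_dominating (V \<times> W) (lex_edges E F) [1,0,0] (move g u p))"
    unfolding secure_w_dominating_def by blast+
  have D: "\<And>h. w_dominating (V \<times> W) (lex_edges E F) [1,0,0] h \<Longrightarrow>
      \<forall>p\<in>V \<times> W. h p = 0 \<longrightarrow> (\<exists>q\<in>?N p. 0 < h q)"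
    using dom100[OF finVW] by blast
  have s0: "\<And>x. s x = 0 \<longleftrightarrow> (\<forall>y\<in>W. g (x,y) = 0)" unfolding s_def using finW by simp
  have sge: "\<And>x y. y \<in> W \<Longrightarrow> g (x,y) \<le> s x" unfolding s_def using finW
    by (metis (no_types, lifting) member_le_sum zero_le)
  have srem: "\<And>x y. y \<in> W \<Longrightarrow> s x = g (x,y) + (\<Sum>y'\<in>W - {y}. g (x,y'))"
    unfolding s_def using finW by (simp add: sum.remove)
  have ff: "\<And>x. f x = min 2 (s x)" by (simp add: f_def s_def)
  have fz: "\<And>x. f x = 0 \<longleftrightarrow> s x = 0" by (simp add: ff min_def)
  have fo: "\<And>x. f x = 1 \<longleftrightarrow> s x = 1" by (simp add: ff min_def)
  have fin_nb: "\<And>x. finite (nbhd V E x)" using finV by (simp add: nbhd_def)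
  have "\<forall>x\<in>V. f x \<le> 2" by (simp add: f_def)
  moreover have "\<forall>x\<in>V. f x = 0 \<longrightarrow> 2 \<le> sum f (nbhd V E x)"
  proof (intro ballI impI)
    fix x assume xV: "x \<in> V" and fx: "f x = 0"
    then have gx0: "\<forall>y\<in>W. g (x,y) = 0" using s0 fz by auto
    from gs xV aW gx0 obtain u where u: "u \<in> ?N (x,a)" "0 < g u"
      and mv: "w_dominating (V \<times> W) (lex_edges E F) [1,0,0] (move g u (x,a))" by fastforce
    obtain x' y' where u': "u = (x',y')" by (cases u)
    have x'V: "x' \<in> V" and y'W: "y' \<in> W" using u u' by (auto simp: lex_nbhd_mem)
    have Exx': "E x x'" using u u' gx0 by (auto simp: lex_nbhd_mem)
    then have x'N: "x' \<in> nbhd V E x" using x'V by (simp add: nbhd_mem)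
    have xx': "x \<noteq> x'" using Exx' irrE by auto
    show "2 \<le> sum f (nbhd V E x)"
    proof (rule ccontr)
      assume lt: "\<not> 2 \<le> sum f (nbhd V E x)"
      have split: "sum f (nbhd V E x) = f x' + sum f (nbhd V E x - {x'})"
        using x'N fin_nb by (simp add: sum.remove)
      have "1 \<le> s x'" using sge[OF y'W, of x'] u u' by auto
      then have "1 \<le> f x'" using ff by simp
      then have fx'1: "f x' = 1" and rest0: "sum f (nbhd V E x - {x'}) = 0" using lt split by auto
      have others: "\<And>z y. z \<in> nbhd V E x \<Longrightarrow> z \<noteq> x' \<Longrightarrow> y \<in> W \<Longrightarrow> g (z,y) = 0"
      proof -
        fix z y assume "z \<in> nbhd V E x" "z \<noteq> x'" "y \<in> W"
        then have "f z = 0" using rest0 fin_nb sum_eq_0_iff by fastforce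
        then show "g (z,y) = 0" using s0 fz \<open>y \<in> W\<close> by auto
      qed
      have "s x' = 1" using fx'1 fo by simp
      then have gu1: "g (x',y') = 1" and r0: "(\<Sum>y\<in>W - {y'}. g (x',y)) = 0"
        using srem[OF y'W, of x'] u u' by auto
      have gx'0: "\<forall>y\<in>W - {y'}. g (x',y) = 0" using r0 finW by simp
      define g' where "g' = move g u (x,a)"
      have "g' (x,b) = 0" using ab xx' gx0 bW u' by (simp add: g'_def move_def)
      with D[OF mv[folded g'_def]] xV bW obtain q where q: "q \<in> ?N (x,b)" "0 < g' q" by blast
      obtain q1 q2 where q': "q = (q1,q2)" by (cases q)
      have q1V: "q1 \<in> V" and q2W: "q2 \<in> W" and qadj: "E x q1 \<or> (x = q1 \<and> F b q2)"
        using q q' by (auto simp: lex_nbhd_mem)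
      show False
      proof (cases "q = (x,a)")
        case True
        then have "F b a" using qadj q' irrE by auto
        then show False using symF nab by blast
      next
        case qa: False
        show False
        proof (cases "q = u")
          case True
          then have "g' q = 0" using gu1 u' qa by (simp add: g'_def move_def)
          then show False using q by simp
        next
          case False
          then have "g' q = g q" using qa by (simp add: g'_def move_def)
          moreover have "g q = 0"
          proof (cases "q1 = x")
            case True then show ?thesis using gx0 q' q2W by simp
          next
            case q1x: False
            then have Eq: "E x q1" using qadj by auto
            show ?thesis
            proof (cases "q1 = x'")
              case True
              then have "q2 \<noteq> y'" using False q' u' by auto
              then show ?thesis using gx'0 True q' q2W by auto
            next
              case False
              then show ?thesis using others[of q1 q2] Eq q1V q2W q' by (simp add: nbhd_mem)
            qed
          qed
          ultimately show False using q by simp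
        qed
      qed
    qed
  qed
  moreover have "\<forall>x\<in>V. f x = 1 \<longrightarrow> 1 \<le> sum f (nbhd V E x)"
  proof (intro ballI impI)
    fix x assume xV: "x \<in> V" and fx: "f x = 1"
    then have sx: "s x = 1" using fo by simp
    then obtain y0 where y0: "y0 \<in> W" "0 < g (x,y0)" using s0[of x] by auto
    have gy01: "g (x,y0) = 1" and r0: "(\<Sum>y\<in>W - {y0}. g (x,y)) = 0"
      using srem[OF y0(1), of x] sx y0 by auto
    have gxo: "\<forall>y\<in>W - {y0}. g (x,y) = 0" using r0 finW by simp
    show "1 \<le> sum f (nbhd V E x)"
    proof (rule ccontr)
      assume "\<not> 1 \<le> sum f (nbhd V E x)"
      then have "sum f (nbhd V E x) = 0" by simp
      then have "\<forall>z\<in>nbhd V E x. f z = 0" using fin_nb sum_eq_0_iff by blast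
      then have nz: "\<And>z y. z \<in> V \<Longrightarrow> E x z \<Longrightarrow> y \<in> W \<Longrightarrow> g (z,y) = 0"
        using s0 fz by (auto simp: nbhd_mem)
      have claim: "\<And>y. y \<in> W \<Longrightarrow> y \<noteq> y0 \<Longrightarrow> F y y0 \<and> (\<forall>y'\<in>W. y' \<noteq> y \<and> y' \<noteq> y0 \<longrightarrow> F y' y)"
      proof -
        fix y assume yW: "y \<in> W" and yy0: "y \<noteq> y0"
        then have gxy: "g (x,y) = 0" using gxo by auto
        from gs xV yW gxy obtain u where u: "u \<in> ?N (x,y)" "0 < g u"
          and mv: "w_dominating (V \<times> W) (lex_edges E F) [1,0,0] (move g u (x,y))" by fastforce
        obtain u1 u2 where u': "u = (u1,u2)" by (cases u)
        have u1V: "u1 \<in> V" and u2W: "u2 \<in> W" and uadj: "E x u1 \<or> (x = u1 \<and> F y u2)"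
          using u u' by (auto simp: lex_nbhd_mem)
        have "\<not> E x u1" using nz[OF u1V _ u2W] u u' by auto
        then have u1x: "u1 = x" and Fyu2: "F y u2" using uadj by auto
        have "u2 = y0" using gxo u u' u1x u2W by (metis DiffI less_not_refl2 singletonD)
        then have uu: "u = (x,y0)" using u' u1x by simp
        have F1: "F y y0" using Fyu2 \<open>u2 = y0\<close> by simp
        have "\<forall>y'\<in>W. y' \<noteq> y \<and> y' \<noteq> y0 \<longrightarrow> F y' y"
        proof (intro ballI impI)
          fix y' assume y'W: "y' \<in> W" and y'ne: "y' \<noteq> y \<and> y' \<noteq> y0"
          define g' where "g' = move g u (x,y)"
          have "g' (x,y') = 0" using y'ne gxo y'W uu by (simp add: g'_def move_def)
          with D[OF mv[folded g'_def]] xV y'W obtain q where q: "q \<in> ?N (x,y')" "0 < g' q" by blast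
          obtain q1 q2 where q': "q = (q1,q2)" by (cases q)
          have q1V: "q1 \<in> V" and q2W: "q2 \<in> W" and qadj: "E x q1 \<or> (x = q1 \<and> F y' q2)"
            using q q' by (auto simp: lex_nbhd_mem)
          show "F y' y"
          proof (cases "E x q1")
            case True
            then have "q1 \<noteq> x" using irrE by auto
            then have "g' q = g q" using q' uu by (simp add: g'_def move_def)
            then show ?thesis using nz[OF q1V True q2W] q q' by simp
          next
            case False
            then have q1x: "q1 = x" and Fq: "F y' q2" using qadj by auto
            show ?thesis
            proof (cases "q2 = y")
              case True then show ?thesis using Fq by simp
            next
              case False
              show ?thesis
              proof (cases "q2 = y0")
                case True
                then have "g' q = 0" using q' q1x uu gy01 False by (simp add: g'_def move_def)
                then show ?thesis using q by simp
              next
                case q2y0: False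
                then have "g' q = 0" using q' q1x uu False gxo q2W by (simp add: g'_def move_def)
                then show ?thesis using q by simp
              qed
            qed
          qed
        qed
        then show "F y y0 \<and> (\<forall>y'\<in>W. y' \<noteq> y \<and> y' \<noteq> y0 \<longrightarrow> F y' y)" using F1 by blast
      qed
      have "F a b"
      proof (cases "a = y0")
        case True
        then show ?thesis using claim[OF bW] ab symF by auto
      next
        case False
        show ?thesis
        proof (cases "b = y0")
          case True then show ?thesis using claim[OF aW False] by auto
        next
          case False
          then show ?thesis using claim[OF bW False] aW ab \<open>a \<noteq> y0\<close> by auto
        qed
      qed
      then show False using nab by simp
    qed
  qed
  ultimately show "w_dominating V E [2,1,0] (\<lambda>x. min 2 (\<Sum>y\<in>W. g (x,y)))"
    unfolding dom210 f_def by blast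
  have "weight V f \<le> (\<Sum>x\<in>V. s x)" unfolding weight_def using ff by (simp add: sum_mono)
  also have "\<dots> = weight (V \<times> W) g" unfolding weight_def s_def by (simp add: sum.cartesian_product)
  finally show "weight V (\<lambda>x. min 2 (\<Sum>y\<in>W. g (x,y))) \<le> weight (V \<times> W) g" by (simp add: f_def)
qed


theorem theorem15:
  fixes V :: "'a set" and E :: "'a \<Rightarrow> 'a \<Rightarrow> bool"
    and W :: "'b set" and F :: "'b \<Rightarrow> 'b \<Rightarrow> bool"
  assumes "graph V E" and "graph W F"
    and "no_isolated V E"
    and "\<not> complete_graph W F"
    and "domination_number W F = 1"
  shows "secure_w_domination_number (V \<times> W) (lex_edges E F) [1, 0, 0]
           = w_domination_number V E [2, 1, 0]"
proof -
  obtain h where hW: "h \<in> W" and hu: "\<forall>v\<in>W. v \<noteq> h \<longrightarrow> F v h"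
    using dom_number_1[OF assms(2,5)] by blast
  obtain a b where ab: "a \<in> W" "b \<in> W" "a \<noteq> b" "\<not> F a b"
    using assms(4) unfolding complete_graph_def by blast
  have ex2: "\<exists>n f. w_dominating V E [2,1,0] f \<and> weight V f = n"
  proof -
    have "w_dominating V E [2,1,0] (\<lambda>_. 2)" unfolding w_dominating_def by simp
    then show ?thesis by blast
  qed
  from LeastI_ex[OF ex2] obtain f where fd: "w_dominating V E [2,1,0] f"
    and fw: "weight V f = w_domination_number V E [2,1,0]"
    unfolding w_domination_number_def by blast
  note up = upper[OF assms(1,2) hW hu fd]
  have le1: "secure_w_domination_number (V \<times> W) (lex_edges E F) [1, 0, 0] \<le> w_domination_number V E [2, 1, 0]"
    unfolding secure_w_domination_number_def
    by (rule Least_le) (use up fw in auto)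
  have ex1: "\<exists>n g. secure_w_dominating (V \<times> W) (lex_edges E F) [1,0,0] g \<and> weight (V \<times> W) g = n"
    using up by blast
  from LeastI_ex[OF ex1] obtain g where gs: "secure_w_dominating (V \<times> W) (lex_edges E F) [1,0,0] g"
    and gw: "weight (V \<times> W) g = secure_w_domination_number (V \<times> W) (lex_edges E F) [1, 0, 0]"
    unfolding secure_w_domination_number_def by blast
  note lo = lower[OF assms(1,2) ab gs]
  have "w_domination_number V E [2, 1, 0] \<le> weight V (\<lambda>x. min 2 (\<Sum>y\<in>W. g (x,y)))"
    unfolding w_domination_number_def by (rule Least_le) (use lo in auto)
  with lo(2) gw have "w_domination_number V E [2, 1, 0] \<le> secure_w_domination_number (V \<times> W) (lex_edges E F) [1, 0, 0]"
    by linarith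
  with le1 show ?thesis by linarith
qed

end
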